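(* With $c_*=\frac2{\sqrt3}$, $h_1(c_* )<\pi$.
   Context: Let $K(R)=\frac{\exp(\frac{R^2-1}{2})}{R}$ for $R>0$ (strictly decreasing on $(0,1]$, $K(1)=1$). For $s\ge1$ let $R^-(s)\in(0,1]$ be the solution of $K(R)=s$ in $(0,1]$. For $c\ge c_*$, $h_1(c)=\int_{\pi/3}^{2\pi/3}\frac{d\psi}{1-[R^-(c\sin\psi)]^2}$. *)

theory Defs
  imports "HOL-Analysis.Analysis"
begin

definition K :: "real \<Rightarrow> real" where
  "K R = exp ((R^2 - 1) / 2) / R"

definition Rminus :: "real \<Rightarrow> real" where
  "Rminus s = (THE R. R \<in> {0<..1} \<and> K R = s)"

definition c_star :: real where
  "c_star = 2 / sqrt 3"

definition h1_integrand :: "real \<Rightarrow> real \<Rightarrow> real" where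
  "h1_integrand c \<psi> = 1 / (1 - (Rminus (c * sin \<psi>))^2)"

definition h1 :: "real \<Rightarrow> real" where
  "h1 c = integral {pi/3..2*pi/3} (h1_integrand c)"

end

theory Submission
  imports Defs "HOL-Analysis.Analysis"
begin

lemma K_alt: "x > 0 \<Longrightarrow> K x = exp ((x^2 - 1)/2 - ln x)"
  by (simp add: K_def exp_diff)

lemma K_one: "K 1 = 1" by (simp add: K_def)

lemma K_strict:
  assumes "0 < a" "a < b" "b \<le> 1"
  shows "K b < K a"
proof -
  have "ln (a/b) \<le> a/b - 1" using assms by (intro ln_le_minus_one) auto
  hence l: "ln a - ln b \<le> a/b - 1" using assms by (simp add: ln_div)
  have "a/b - 1 = -(b-a)/b" using assms by (simp add: field_simps)
  also have "\<dots> \<le> -(b-a)"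
  proof -
    have "(b-a)*b \<le> (b-a)*1" using assms by (intro mult_left_mono) auto
    hence "b - a \<le> (b-a)/b" using assms by (simp add: field_simps)
    thus ?thesis by (metis minus_divide_left neg_le_iff_le)
  qed
  finally have "ln a - ln b \<le> -(b - a)" using l by linarith
  moreover have "(b^2 - a^2)/2 < b - a"
  proof -
    have "b^2 - a^2 = (b-a)*(b+a)" by (simp add: power2_eq_square algebra_simps)
    moreover have "(b-a)*(b+a) < (b-a)*2" using assms by (intro mult_strict_left_mono) auto
    ultimately show ?thesis by simp
  qed
  ultimately have "(b^2 - 1)/2 - ln b < (a^2 - 1)/2 - ln a" by (simp add: field_simps)
  thus ?thesis using assms by (simp add: K_alt)
qed

lemma K_cont: "continuous_on {0<..} K"
  unfolding K_def by (intro continuous_intros) auto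

lemma K_quarter: "5/4 \<le> K (1/4)"
proof -
  have "1 + (-15/32) \<le> exp (-15/32::real)" by (rule exp_ge_add_one_self)
  thus ?thesis by (simp add: K_def power2_eq_square)
qed

lemma Rminus_prop:
  assumes "1 \<le> s" "s \<le> 5/4"
  shows "Rminus s \<in> {1/4..1} \<and> K (Rminus s) = s"
proof -
  have "continuous_on {1/4..1} K" using K_cont by (rule continuous_on_subset) auto
  then obtain R where R: "1/4 \<le> R" "R \<le> 1" "K R = s"
    using IVT2'[of K 1 s "1/4"] assms K_one K_quarter by auto
  have uniq: "R' = R" if "R' \<in> {0<..1}" "K R' = s" for R'
  proof (rule ccontr)
    assume "R' \<noteq> R"
    then consider "R' < R" | "R < R'" by linarith
    thus False
    proof cases
      case 1 thus ?thesis using K_strict[of R' R] that R by auto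
    next
      case 2 thus ?thesis using K_strict[of R R'] that R by auto
    qed
  qed
  have "Rminus s = R" unfolding Rminus_def
    by (rule the_equality) (use R uniq in auto)
  thus ?thesis using R by auto
qed

lemma Rminus_K: assumes "x \<in> {0<..1}" shows "Rminus (K x) = x"
proof -
  have uniq: "R' = x" if "R' \<in> {0<..1}" "K R' = K x" for R'
  proof (rule ccontr)
    assume "R' \<noteq> x"
    then consider "R' < x" | "x < R'" by linarith
    thus False
    proof cases
      case 1 thus ?thesis using K_strict[of R' x] that assms by auto
    next
      case 2 thus ?thesis using K_strict[of x R'] that assms by auto
    qed
  qed
  show ?thesis unfolding Rminus_def
    by (rule the_equality) (use assms uniq in auto)
qed

lemma Rminus_cont: "continuous_on {1..5/4} Rminus"
proof -
  have "continuous_on (K ` {1/4..1}) Rminus"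
    by (rule continuous_on_inv) (auto intro: continuous_on_subset[OF K_cont] simp: Rminus_K)
  moreover have "{1..5/4} \<subseteq> K ` {1/4..1}"
  proof
    fix s :: real assume "s \<in> {1..5/4}"
    hence "Rminus s \<in> {1/4..1} \<and> K (Rminus s) = s" using Rminus_prop by auto
    thus "s \<in> K ` {1/4..1}" by (metis image_eqI)
  qed
  ultimately show ?thesis by (rule continuous_on_subset)
qed

lemma ln_lower:
  fixes u :: real
  assumes "0 < u" "u \<le> 1"
  shows "(u - 1/u)/2 \<le> ln u"
proof -
  let ?h = "\<lambda>x::real. ln x - (x - 1/x)/2"
  have "?h 1 \<le> ?h u"
  proof (rule DERIV_nonpos_imp_nonincreasing[of u 1 ?h])
    show "u \<le> 1" by fact
    fix x assume x: "u \<le> x" "x \<le> 1"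
    hence xp: "x > 0" using assms by linarith
    have "DERIV ?h x :> (1/x - (1 + 1/x^2)/2)"
      using xp by (auto intro!: derivative_eq_intros simp: field_simps power2_eq_square)
    moreover have "1/x - (1 + 1/x^2)/2 = -((x-1)^2/(2*x^2))"
      using xp by (simp add: field_simps power2_eq_square)
    moreover have "(x-1)^2/(2*x^2) \<ge> 0" by simp
    ultimately show "\<exists>y. DERIV ?h x :> y \<and> y \<le> 0" by auto
  qed
  thus ?thesis by simp
qed

lemma key_bound:
  assumes "1 < s" "s \<le> 5/4"
  shows "1 / (1 - (Rminus s)^2) \<le> 5/8 + 1 / (2 * sqrt (ln s))"
proof -
  obtain R where R: "R = Rminus s" by blast
  have RR: "R \<in> {1/4..1}" "K R = s" using Rminus_prop[of s] assms R by auto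
  have "R \<noteq> 1" using RR K_one assms by auto
  hence R1: "R < 1" "R > 0" using RR by auto
  define u where "u = R^2"
  have u: "0 < u" "u < 1" using R1 unfolding u_def by (auto simp: power_less_one_iff)
  have "s = exp ((R^2 - 1)/2 - ln R)" using RR(2) R1 by (simp add: K_alt)
  hence "ln s = (u - 1)/2 - ln R" unfolding u_def by simp
  also have "ln R = ln u / 2" unfolding u_def using R1 by (simp add: ln_realpow)
  finally have ls: "ln s = (u - 1)/2 - ln u / 2" .
  have "ln s \<le> (u - 1)/2 - (u - 1/u)/4" using ls ln_lower[of u] u by auto
  also have "\<dots> = (1-u)^2/(4*u)" using u by (simp add: field_simps power2_eq_square)
  finally have L1: "4 * ln s * u \<le> (1-u)^2" using u by (simp add: field_simps)
  define L where "L = 4 * ln s"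
  have Lpos: "L > 0" unfolding L_def using assms by simp
  have "ln s \<le> s - 1" using assms by (intro ln_le_minus_one) auto
  hence Lle: "L \<le> 1" unfolding L_def using assms by simp
  define v where "v = 1 - u"
  have v: "0 < v" "v < 1" using u unfolding v_def by auto
  define y where "y = 1/v"
  have y: "y > 1" unfolding y_def using v by (simp add: field_simps)
  have Lv: "L * (1 - v) \<le> v^2" using L1 unfolding L_def v_def by (simp add: algebra_simps)
  have "L * (y^2 - y) \<le> 1"
  proof -
    have "L * (y^2 - y) = L * (1 - v) / v^2" unfolding y_def using v
      by (simp add: field_simps power2_eq_square)
    also have "\<dots> \<le> v^2 / v^2" using Lv v by (intro divide_right_mono) auto
    finally show ?thesis using v by simp
  qed
  hence yX: "y^2 - y \<le> 1/L" using Lpos by (simp add: field_simps)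
  define X where "X = 1/L"
  have X1: "X \<ge> 1" unfolding X_def using Lpos Lle by (simp add: field_simps)
  have sX: "sqrt X \<ge> 1" using X1 by simp
  have "y \<le> 5/8 + sqrt X"
  proof (rule ccontr)
    assume "\<not> ?thesis"
    hence gt: "y > 5/8 + sqrt X" by simp
    let ?m = "5/8 + sqrt X"
    have "?m^2 - ?m = X + sqrt X / 4 - 15/64"
      using X1 by (simp add: power2_eq_square algebra_simps)
    have "y^2 - y - (?m^2 - ?m) = (y - ?m) * (y + ?m - 1)" by (simp add: power2_eq_square algebra_simps)
    moreover have "(y - ?m) * (y + ?m - 1) > 0" by (intro mult_pos_pos; use gt sX in linarith)
    ultimately have "y^2 - y > ?m^2 - ?m" by linarith
    also have "?m^2 - ?m = X + sqrt X / 4 - 15/64"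
      using X1 by (simp add: power2_eq_square algebra_simps)
    finally have "y^2 - y > X" using sX by linarith
    thus False using yX unfolding X_def by linarith
  qed
  moreover have "sqrt X = 1 / (2 * sqrt (ln s))"
    unfolding X_def L_def by (simp add: real_sqrt_divide real_sqrt_mult)
  moreover have "1 / (1 - (Rminus s)^2) = y" unfolding y_def v_def u_def R by simp
  ultimately show ?thesis by simp
qed

lemma cos_bound:
  assumes "\<bar>t\<bar> \<le> pi/6"
  shows "((pi/6)^2 - t^2)/2 \<le> ln (cos t) - ln (cos (pi/6))"
proof -
  let ?p = "\<lambda>x::real. ln (cos x) + x^2/2"
  have "?p (pi/6) \<le> ?p \<bar>t\<bar>"
  proof (rule DERIV_nonpos_imp_nonincreasing[of "\<bar>t\<bar>" "pi/6" ?p])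
    show "\<bar>t\<bar> \<le> pi/6" by fact
    fix x assume x: "\<bar>t\<bar> \<le> x" "x \<le> pi/6"
    have x0: "0 \<le> x" using x by linarith
    have xp: "x < pi/2" using x pi_gt_zero by linarith
    have cp: "cos x > 0" using x0 xp by (intro cos_gt_zero_pi) auto
    have "DERIV ?p x :> (- sin x / cos x + x)"
      using cp by (auto intro!: derivative_eq_intros simp: field_simps power2_eq_square)
    moreover have "x \<le> tan x"
    proof -
      have "\<bar>x\<bar> \<le> \<bar>tan x\<bar>" using x0 xp by (intro abs_tan_ge) auto
      moreover have "tan x \<ge> 0" using x0 xp by (intro tan_pos_pi2_le) auto
      ultimately show ?thesis using x0 by simp
    qed
    ultimately show "\<exists>y. DERIV ?p x :> y \<and> y \<le> 0" by (auto simp: tan_def)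
  qed
  hence "ln (cos (pi/6)) + (pi/6)^2/2 \<le> ln (cos t) + t^2/2" by simp
  thus ?thesis by (simp add: field_simps)
qed

lemma point_facts:
  assumes "x \<in> {pi/3<..<2*pi/3}"
  shows "1 < c_star * sin x \<and> c_star * sin x \<le> 5/4 \<and>
         ((pi/6)^2 - (x - pi/2)^2)/2 \<le> ln (c_star * sin x)"
proof -
  define t where "t = x - pi/2"
  have ta: "\<bar>t\<bar> < pi/6" using assms unfolding t_def abs_less_iff by auto
  have sx: "sin x = cos t" unfolding t_def by (simp add: cos_diff)
  have c6: "cos (pi/6) = sqrt 3 / 2" by (rule cos_30)
  have s3: "sqrt 3 > 0" by simp
  have cs: "c_star = 1 / cos (pi/6)" unfolding c_star_def c6 by simp
  have cpos: "cos (pi/6) > 0" unfolding c6 by simp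
  have "pi/6 \<le> pi" using pi_gt_zero by linarith
  hence "cos (pi/6) < cos \<bar>t\<bar>"
    using ta by (intro cos_monotone_0_pi) auto
  hence lt: "cos (pi/6) < cos t" by simp
  have eq: "c_star * sin x = cos t / cos (pi/6)" unfolding cs sx by simp
  have g1: "1 < c_star * sin x" unfolding eq using lt cpos by (simp add: field_simps)
  have "8/5 \<le> sqrt 3" by (rule real_le_rsqrt) (simp add: power2_eq_square)
  hence "c_star \<le> 5/4" unfolding c_star_def using s3 by (simp add: field_simps)
  moreover have "sin x \<le> 1" by simp
  moreover have "c_star > 0" unfolding c_star_def by simp
  moreover have "c_star * sin x \<le> c_star * 1"
    using \<open>sin x \<le> 1\<close> \<open>c_star > 0\<close> by (intro mult_left_mono) auto
  ultimately have g2: "c_star * sin x \<le> 5/4" by linarith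
  have ctpos: "cos t > 0" using lt cpos by linarith
  have "ln (c_star * sin x) = ln (cos t) - ln (cos (pi/6))"
    unfolding eq using ctpos cpos by (simp add: ln_div)
  moreover have "((pi/6)^2 - t^2)/2 \<le> ln (cos t) - ln (cos (pi/6))"
    using ta by (intro cos_bound) auto
  ultimately show ?thesis using g1 g2 unfolding t_def by simp
qed

lemma point_bound:
  assumes "x \<in> {pi/3<..<2*pi/3}"
  shows "0 \<le> h1_integrand c_star x \<and>
    h1_integrand c_star x \<le> 5/8 + 1 / sqrt (2 * ((pi/6)^2 - (x - pi/2)^2))"
proof -
  let ?s = "c_star * sin x"
  let ?a = "(pi/6)^2 - (x - pi/2)^2"
  have P: "1 < ?s" "?s \<le> 5/4" "?a/2 \<le> ln ?s" using point_facts[OF assms] by auto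
  have apos: "?a > 0"
  proof -
    have "\<bar>x - pi/2\<bar> < pi/6" using assms unfolding abs_less_iff by auto
    hence "\<bar>x - pi/2\<bar>^2 < (pi/6)^2"
      by (intro power_strict_mono) auto
    hence "(x - pi/2)^2 < (pi/6)^2" by simp
    thus ?thesis by simp
  qed
  have Rp: "Rminus ?s \<in> {1/4..1}" "K (Rminus ?s) = ?s" using Rminus_prop[of ?s] P by auto
  have "Rminus ?s \<noteq> 1" using Rp(2) P K_one by auto
  hence "Rminus ?s < 1" using Rp by auto
  hence "(Rminus ?s)^2 < 1" using Rp by (simp add: power_less_one_iff)
  hence nn: "0 \<le> h1_integrand c_star x" unfolding h1_integrand_def by simp
  have "h1_integrand c_star x \<le> 5/8 + 1 / (2 * sqrt (ln ?s))"
    unfolding h1_integrand_def using key_bound[OF P(1) P(2)] by simp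
  also have "1 / (2 * sqrt (ln ?s)) \<le> 1 / (2 * sqrt (?a/2))"
    using apos P(3) by (intro divide_left_mono mult_left_mono real_sqrt_le_mono mult_pos_pos) auto
  also have "2 * sqrt (?a/2) = sqrt (2 * ?a)"
  proof -
    have e: "2 * ?a = 4 * (?a/2)" by simp
    have "sqrt (4::real) = 2" by (rule real_sqrt_unique) auto
    hence "sqrt (4 * (?a/2)) = 2 * sqrt (?a/2)" by (simp only: real_sqrt_mult)
    thus ?thesis by (simp only: e)
  qed
  finally show ?thesis using nn by simp
qed

lemma g_integral:
  "((\<lambda>x. 5/8 + 1 / sqrt (2 * ((pi/6)^2 - (x - pi/2)^2))) has_integral (5*pi/24 + pi / sqrt 2))
     {pi/3..2*pi/3}"
proof -
  define F where "F x = 5/8 * x + arcsin ((x - pi/2)/(pi/6)) / sqrt 2" for x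
  have "((\<lambda>x. 5/8 + 1 / sqrt (2 * ((pi/6)^2 - (x - pi/2)^2))) has_integral (F (2*pi/3) - F (pi/3)))
     {pi/3..2*pi/3}"
  proof (rule fundamental_theorem_of_calculus_interior)
    show "pi/3 \<le> 2*pi/3" by simp
    have "\<forall>x\<in>{pi/3..2*pi/3}. -1 \<le> (x - pi/2)/(pi/6) \<and> (x - pi/2)/(pi/6) \<le> 1"
      by (auto simp: field_simps)
    thus "continuous_on {pi/3..2*pi/3} F" unfolding F_def
      by (intro continuous_intros) auto
  next
    fix x assume x: "x \<in> {pi/3<..<2*pi/3}"
    define w where "w = (x - pi/2)/(pi/6)"
    have w: "-1 < w" "w < 1" using x unfolding w_def by (auto simp: field_simps)
    have d1: "DERIV (\<lambda>x. (x - pi/2)/(pi/6)) x :> 6/pi"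
      by (auto intro!: derivative_eq_intros simp: field_simps)
    have d2: "DERIV (\<lambda>x. arcsin ((x - pi/2)/(pi/6))) x :> inverse (sqrt (1 - w^2)) * (6/pi)"
      using DERIV_chain2[OF DERIV_arcsin[OF w, unfolded w_def] d1] unfolding w_def by simp
    have d0: "DERIV (\<lambda>x. 5/8 * x) x :> 5/8" by (auto intro!: derivative_eq_intros)
    have dF: "DERIV F x :> 5/8 + inverse (sqrt (1 - w^2)) * (6/pi) / sqrt 2"
      unfolding F_def by (rule DERIV_add[OF d0 DERIV_cdivide[OF d2]])
    have w2: "1 - w^2 > 0" using w by (simp add: abs_square_less_1)
    have "2 * ((pi/6)^2 - (x - pi/2)^2) = (sqrt 2 * (pi/6))^2 * (1 - w^2)"
      unfolding w_def by (simp add: field_simps power2_eq_square)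
    hence hQ: "sqrt (2 * ((pi/6)^2 - (x - pi/2)^2)) = sqrt 2 * (pi/6) * sqrt (1 - w^2)"
      by (simp add: real_sqrt_mult)
    have "5/8 + inverse (sqrt (1 - w^2)) * (6/pi) / sqrt 2 = 5/8 + 1 / (sqrt 2 * (pi/6) * sqrt (1 - w^2))"
      using w2 by (simp add: field_simps)
    hence "5/8 + inverse (sqrt (1 - w^2)) * (6/pi) / sqrt 2 = 5/8 + 1 / sqrt (2 * ((pi/6)^2 - (x - pi/2)^2))"
      by (simp only: hQ)
    thus "(F has_vector_derivative (5/8 + 1 / sqrt (2 * ((pi/6)^2 - (x - pi/2)^2)))) (at x)"
      using dF by (simp add: has_real_derivative_iff_has_vector_derivative[symmetric])
  qed
  moreover have "F (2*pi/3) - F (pi/3) = 5*pi/24 + pi / sqrt 2"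
  proof -
    have a: "(2*pi/3 - pi/2)/(pi/6) = 1" by (simp add: field_simps)
    have b: "(pi/3 - pi/2)/(pi/6) = -1" by (simp add: field_simps)
    show ?thesis unfolding F_def a b by (simp add: field_simps)
  qed
  ultimately show ?thesis by simp
qed

theorem mainTheorem11:
  shows "h1_integrand c_star integrable_on {pi/3..2*pi/3} \<and> h1 c_star < pi"
proof -
  let ?f = "h1_integrand c_star"
  let ?g = "\<lambda>x. 5/8 + 1 / sqrt (2 * ((pi/6)^2 - (x - pi/2)^2))"
  let ?O = "{pi/3<..<2*pi/3}"
  have gI: "(?g has_integral (5*pi/24 + pi / sqrt 2)) {pi/3..2*pi/3}" by (rule g_integral)
  hence gO: "?g integrable_on ?O" using integrable_on_open_interval_real by blast
  have cR: "continuous_on ?O (\<lambda>x. Rminus (c_star * sin x))"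
  proof (rule continuous_on_compose2[OF Rminus_cont])
    show "continuous_on ?O (\<lambda>x. c_star * sin x)" by (intro continuous_intros)
    show "(\<lambda>x. c_star * sin x) ` ?O \<subseteq> {1..5/4}" using point_facts by fastforce
  qed
  have ne: "1 - (Rminus (c_star * sin x))^2 \<noteq> 0" if "x \<in> ?O" for x
  proof -
    have P: "1 < c_star * sin x" "c_star * sin x \<le> 5/4" using point_facts[OF that] by auto
    have Rp: "Rminus (c_star * sin x) \<in> {1/4..1}" "K (Rminus (c_star * sin x)) = c_star * sin x"
      using Rminus_prop P by auto
    have "Rminus (c_star * sin x) \<noteq> 1" using Rp(2) P K_one by auto
    hence "Rminus (c_star * sin x) < 1" using Rp by auto
    hence "(Rminus (c_star * sin x))^2 < 1" using Rp by (simp add: power_less_one_iff)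
    thus ?thesis by simp
  qed
  have cf: "continuous_on ?O ?f"
    unfolding h1_integrand_def[abs_def]
    by (intro continuous_intros cR) (use ne in auto)
  have Oleb: "?O \<in> sets lebesgue" by simp
  have mf: "?f \<in> borel_measurable (lebesgue_on ?O)"
    by (rule continuous_imp_measurable_on_sets_lebesgue[OF cf Oleb])
  have fO: "?f integrable_on ?O"
    by (rule measurable_bounded_by_integrable_imp_integrable[OF mf gO _ Oleb])
       (use point_bound in auto)
  hence fC: "?f integrable_on {pi/3..2*pi/3}" using integrable_on_open_interval_real by blast
  have "h1 c_star = integral ?O ?f" unfolding h1_def by (rule integral_open_interval_real)
  also have "\<dots> \<le> integral ?O ?g"
    by (rule integral_le[OF fO gO]) (use point_bound in auto)
  also have "\<dots> = integral {pi/3..2*pi/3} ?g" by (rule integral_open_interval_real[symmetric])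
  also have "\<dots> = 5*pi/24 + pi / sqrt 2" using gI by (rule integral_unique)
  also have "\<dots> < pi"
  proof -
    have "24/19 < sqrt 2" by (rule real_less_rsqrt) (simp add: power2_eq_square)
    hence "1 / sqrt 2 < 19/24" by (simp add: field_simps)
    hence "pi * (1 / sqrt 2) < pi * (19/24)" by (intro mult_strict_left_mono) auto
    hence "pi / sqrt 2 < pi * (19/24)" by simp
    thus ?thesis by linarith
  qed
  finally show ?thesis using fC by simp
qed

end
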